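(* Let $C,D$ be sets and let $m$ be a $(C\mathcal y,D\mathcal y)$-bicomodule. Then (1) $m$ is a left adjoint in $\mathbb C\mathbf{at}^\sharp$ if and only if $m$ is linear, i.e. $m\cong M\mathcal y$ for a set $M$; (2) $m$ is a right adjoint in $\mathbb C\mathbf{at}^\sharp$ if and only if $m$ is conjunctive, i.e. $m_a(1)\cong1$ for each $a\in C$. Moreover, the right adjoint of a linear bicomodule corresponding to the span $D\xleftarrow{f}M\xrightarrow{h}C$ is the conjunctive $(D\mathcal y,C\mathcal y)$-bicomodule $\sum_{b\in D}\mathcal y^{f^{-1}(b)}$ (corresponding to $\Pi_f\Delta_h$), and the left adjoint of a conjunctive bicomodule $\sum_{a\in C}\mathcal y^{m[a]}$ (each $m[a]$ a set over $D$) is the linear $(D\mathcal y,C\mathcal y)$-bicomodule $\sum_{b\in D}\sum_{a\in C}\sum_{x\in m[a]_b}\mathcal y$.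
   Context: $\mathbb C\mathbf{at}^\sharp$: the bicategory whose objects are comonoids in $(\mathbf{Poly},\mathcal y,\triangleleft)$ (small categories), 1-cells $(c,d)$-bicomodules (polynomials $m$ with compatible coassociative counital coactions $m\to c\triangleleft m$, $m\to m\triangleleft d$), 2-cells bicomodule maps, composition $\triangleleft_d$ (equalizer of $m\triangleleft n\rightrightarrows m\triangleleft d\triangleleft n$), and identity on $c$ the bicomodule $c$. Adjunctions are internal to this bicategory. $C\mathcal y$ is the discrete category on the set $C$. For a $(c,d)$-bicomodule $m$ and $a\in c(1)$, $m_a$ is the summand of $m$ over $a$ under $m\to c\triangleleft m\to c(1)$. A $(C\mathcal y,D\mathcal y)$-bicomodule with linear carrier $M\mathcal y$ is the same as a span $C\leftarrow M\to D$; for a conjunctive one, $m[a]$ is a set equipped with a map to $D$, and $m[a]_b$ its fiber over $b$. *)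

theory Defs
  imports Main "HOL-Library.FuncSet"
begin

text \<open>A (C y, D y)-bicomodule (C, D discrete), unfolded: a polynomial
  sum over positions i of y^(dir i); the left coaction is a map
  base : positions to C; the right coaction labels each direction of i by an
  element of D (lab i).\<close>

record ('i, 'e, 'c, 'd) bicomod =
  pos  :: "'i set"
  base :: "'i \<Rightarrow> 'c"
  dir  :: "'i \<Rightarrow> 'e set"
  lab  :: "'i \<Rightarrow> 'e \<Rightarrow> 'd"

definition wf_bicomod :: "'c set \<Rightarrow> 'd set \<Rightarrow> ('i, 'e, 'c, 'd) bicomod \<Rightarrow> bool" where
  "wf_bicomod C D m \<longleftrightarrow>
     (\<forall>i\<in>pos m. base m i \<in> C \<and> (\<forall>e\<in>dir m i. lab m i e \<in> D))"

definition idb :: "'c set \<Rightarrow> ('c, unit, 'c, 'c) bicomod" where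
  "idb C = \<lparr>pos = C, base = id, dir = (\<lambda>_. {()}), lab = (\<lambda>a _. a)\<rparr>"

text \<open>Composite m \<triangleleft>_D n (the equalizer, computed).\<close>
definition bcomp :: "('i, 'e, 'c, 'd) bicomod \<Rightarrow> ('j, 'f, 'd, 'x) bicomod
     \<Rightarrow> ('i \<times> ('e \<Rightarrow> 'j), 'e \<times> 'f, 'c, 'x) bicomod" where
  "bcomp m n = \<lparr>pos = {(i, g). i \<in> pos m \<and> g \<in> dir m i \<rightarrow>\<^sub>E pos n
                      \<and> (\<forall>e\<in>dir m i. base n (g e) = lab m i e)},
               base = (\<lambda>(i, g). base m i),
               dir = (\<lambda>(i, g). SIGMA e:dir m i. dir n (g e)),
               lab = (\<lambda>(i, g) (e, x). lab n (g e) x)\<rparr>"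

text \<open>Maps of bicomodules (2-cells): maps of polynomials (forward on positions,
  backward on directions) compatible with both coactions.\<close>
record ('i, 'j, 'f, 'e) bmap =
  onpos :: "'i \<Rightarrow> 'j"
  ondir :: "'i \<Rightarrow> 'f \<Rightarrow> 'e"

definition is_bmap :: "('i, 'e, 'c, 'd) bicomod \<Rightarrow> ('j, 'f, 'c, 'd) bicomod
     \<Rightarrow> ('i, 'j, 'f, 'e) bmap \<Rightarrow> bool" where
  "is_bmap m m' \<phi> \<longleftrightarrow>
     (\<forall>i\<in>pos m. onpos \<phi> i \<in> pos m' \<and> base m' (onpos \<phi> i) = base m i \<and>
        (\<forall>e'\<in>dir m' (onpos \<phi> i). ondir \<phi> i e' \<in> dir m i \<and>
             lab m i (ondir \<phi> i e') = lab m' (onpos \<phi> i) e'))"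

definition bmap_eq :: "('i, 'e, 'c, 'd) bicomod \<Rightarrow> ('j, 'f, 'c, 'd) bicomod
     \<Rightarrow> ('i, 'j, 'f, 'e) bmap \<Rightarrow> ('i, 'j, 'f, 'e) bmap \<Rightarrow> bool" where
  "bmap_eq m m' \<phi> \<psi> \<longleftrightarrow>
     (\<forall>i\<in>pos m. onpos \<phi> i = onpos \<psi> i \<and>
        (\<forall>e'\<in>dir m' (onpos \<phi> i). ondir \<phi> i e' = ondir \<psi> i e'))"

definition idmap :: "('i, 'i, 'e, 'e) bmap" where
  "idmap = \<lparr>onpos = id, ondir = (\<lambda>_ e. e)\<rparr>"

text \<open>Vertical composite: first \<phi>, then \<psi>.\<close>
definition vcomp :: "('i, 'j, 'f, 'e) bmap \<Rightarrow> ('j, 'k, 'g, 'f) bmap \<Rightarrow> ('i, 'k, 'g, 'e) bmap" where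
  "vcomp \<phi> \<psi> = \<lparr>onpos = onpos \<psi> \<circ> onpos \<phi>,
                  ondir = (\<lambda>i e. ondir \<phi> i (ondir \<psi> (onpos \<phi> i) e))\<rparr>"

text \<open>Whiskering: m \<triangleleft> \<alpha> : m\<triangleleft>p \<rightarrow> m\<triangleleft>q, and \<alpha> \<triangleleft> n : p\<triangleleft>n \<rightarrow> q\<triangleleft>n
  (the second takes the target q of \<alpha> as argument).\<close>
definition lwhisk :: "('i, 'e, 'c, 'd) bicomod \<Rightarrow> ('j, 'k, 'h, 'f) bmap
     \<Rightarrow> ('i \<times> ('e \<Rightarrow> 'j), 'i \<times> ('e \<Rightarrow> 'k), 'e \<times> 'h, 'e \<times> 'f) bmap" where
  "lwhisk m \<alpha> = \<lparr>onpos = (\<lambda>(i, g). (i, \<lambda>e\<in>dir m i. onpos \<alpha> (g e))),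
                 ondir = (\<lambda>(i, g) (e, y). (e, ondir \<alpha> (g e) y))\<rparr>"

definition rwhisk :: "('i, 'k, 'h, 'e) bmap \<Rightarrow> ('k, 'h, 'c, 'd) bicomod
     \<Rightarrow> ('i \<times> ('e \<Rightarrow> 'j), 'k \<times> ('h \<Rightarrow> 'j), 'h \<times> 'f, 'e \<times> 'f) bmap" where
  "rwhisk \<alpha> q = \<lparr>onpos = (\<lambda>(i, g). (onpos \<alpha> i, \<lambda>e'\<in>dir q (onpos \<alpha> i). g (ondir \<alpha> i e'))),
                 ondir = (\<lambda>(i, g) (e', y). (ondir \<alpha> i e', y))\<rparr>"

definition bassoc :: "('i, 'e, 'c, 'd) bicomod \<Rightarrow> ('j, 'f, 'd, 'x) bicomod
     \<Rightarrow> (('i \<times> ('e \<Rightarrow> 'j)) \<times> ('e \<times> 'f \<Rightarrow> 'k), 'i \<times> ('e \<Rightarrow> 'j \<times> ('f \<Rightarrow> 'k)),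
         'e \<times> 'f \<times> 'h, ('e \<times> 'f) \<times> 'h) bmap" where
  "bassoc m n = \<lparr>onpos = (\<lambda>((i, g), h). (i, \<lambda>e\<in>dir m i. (g e, \<lambda>y\<in>dir n (g e). h (e, y)))),
                 ondir = (\<lambda>_ (e, y, z). ((e, y), z))\<rparr>"

definition bassoc_inv :: "('i, 'e, 'c, 'd) bicomod \<Rightarrow> ('j, 'f, 'd, 'x) bicomod
     \<Rightarrow> ('i \<times> ('e \<Rightarrow> 'j \<times> ('f \<Rightarrow> 'k)), ('i \<times> ('e \<Rightarrow> 'j)) \<times> ('e \<times> 'f \<Rightarrow> 'k),
         ('e \<times> 'f) \<times> 'h, 'e \<times> 'f \<times> 'h) bmap" where
  "bassoc_inv m n = \<lparr>onpos = (\<lambda>(i, G). ((i, \<lambda>e\<in>dir m i. fst (G e)),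
                        \<lambda>q\<in>(SIGMA e:dir m i. dir n (fst (G e))). snd (G (fst q)) (snd q))),
                     ondir = (\<lambda>_ ((e, y), z). (e, y, z))\<rparr>"

definition runit_inv :: "('i, 'e, 'c, 'd) bicomod \<Rightarrow> ('i, 'i \<times> ('e \<Rightarrow> 'd), 'e \<times> unit, 'e) bmap" where
  "runit_inv m = \<lparr>onpos = (\<lambda>i. (i, \<lambda>e\<in>dir m i. lab m i e)), ondir = (\<lambda>_ (e, u). e)\<rparr>"

definition runit :: "('i \<times> ('e \<Rightarrow> 'd), 'i, 'e, 'e \<times> unit) bmap" where
  "runit = \<lparr>onpos = fst, ondir = (\<lambda>_ y. (y, ()))\<rparr>"

definition lunit :: "('c \<times> (unit \<Rightarrow> 'i), 'i, 'e, unit \<times> 'e) bmap" where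
  "lunit = \<lparr>onpos = (\<lambda>(a, g). g ()), ondir = (\<lambda>_ e. ((), e))\<rparr>"

definition lunit_inv :: "('i, 'e, 'c, 'd) bicomod \<Rightarrow> ('i, 'c \<times> (unit \<Rightarrow> 'i), unit \<times> 'e, 'e) bmap" where
  "lunit_inv n = \<lparr>onpos = (\<lambda>j. (base n j, \<lambda>u\<in>{()}. j)), ondir = (\<lambda>_ (u, y). y)\<rparr>"

text \<open>Internal adjunction m \<stileturn> n in Cat#, m a (C y, D y)-bicomodule
  (left adjoint), n a (D y, C y)-bicomodule (right adjoint):
  unit  id_D \<Rightarrow> n \<triangleleft> m, counit m \<triangleleft> n \<Rightarrow> id_C, plus the two triangle identities.\<close>
definition is_adjunction :: "'c set \<Rightarrow> 'd set \<Rightarrow> ('i, 'e, 'c, 'd) bicomod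
     \<Rightarrow> ('j, 'f, 'd, 'c) bicomod \<Rightarrow> bool" where
  "is_adjunction C D m n \<longleftrightarrow> wf_bicomod C D m \<and> wf_bicomod D C n \<and>
     (\<exists>\<eta> \<epsilon>. is_bmap (idb D) (bcomp n m) \<eta> \<and> is_bmap (bcomp m n) (idb C) \<epsilon> \<and>
        bmap_eq m m
          (vcomp (runit_inv m) (vcomp (lwhisk m \<eta>) (vcomp (bassoc_inv m n)
             (vcomp (rwhisk \<epsilon> (idb C)) lunit)))) idmap \<and>
        bmap_eq n n
          (vcomp (lunit_inv n) (vcomp (rwhisk \<eta> (bcomp n m)) (vcomp (bassoc n m)
             (vcomp (lwhisk n \<epsilon>) runit)))) idmap)"

text \<open>Linear: the carrier is M y (each position has exactly one direction).
  Conjunctive: m_a(1) = 1 for each a in C.\<close>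
definition linear_bicomod :: "('i, 'e, 'c, 'd) bicomod \<Rightarrow> bool" where
  "linear_bicomod m \<longleftrightarrow> (\<forall>i\<in>pos m. \<exists>!e. e \<in> dir m i)"

definition conjunctive_bicomod :: "'c set \<Rightarrow> ('i, 'e, 'c, 'd) bicomod \<Rightarrow> bool" where
  "conjunctive_bicomod C m \<longleftrightarrow> (\<forall>a\<in>C. \<exists>!i. i \<in> pos m \<and> base m i = a)"

text \<open>For a linear m, the span D <-f- M -h-> C with M = positions, f = label of
  the unique direction, h = base; its right adjoint sum_{b in D} y^(f^-1 b).\<close>
definition lin_radj :: "'d set \<Rightarrow> ('i, 'e, 'c, 'd) bicomod \<Rightarrow> ('d, 'i, 'd, 'c) bicomod" where
  "lin_radj D m = \<lparr>pos = D, base = id,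
     dir = (\<lambda>b. {i \<in> pos m. lab m i (THE e. e \<in> dir m i) = b}),
     lab = (\<lambda>b i. base m i)\<rparr>"

text \<open>For a conjunctive m, m[a] = directions of the unique position over a;
  left adjoint sum_{b in D} sum_{a in C} sum_{x in m[a]_b} y.\<close>
definition conj_pos :: "('i, 'e, 'c, 'd) bicomod \<Rightarrow> 'c \<Rightarrow> 'i" where
  "conj_pos m a = (THE i. i \<in> pos m \<and> base m i = a)"

definition conj_ladj :: "'c set \<Rightarrow> 'd set \<Rightarrow> ('i, 'e, 'c, 'd) bicomod
     \<Rightarrow> ('d \<times> 'c \<times> 'e, unit, 'd, 'c) bicomod" where
  "conj_ladj C D m = \<lparr>pos = {(b, a, x). b \<in> D \<and> a \<in> C \<and> x \<in> dir m (conj_pos m a)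
                               \<and> lab m (conj_pos m a) x = b},
     base = (\<lambda>(b, a, x). b), dir = (\<lambda>_. {()}), lab = (\<lambda>(b, a, x) _. a)\<rparr>"

end

theory Submission
  imports Defs
begin

lemma lin_nec:
  assumes wf: "wf_bicomod C D m" and adj: "is_adjunction C D m n"
  shows "linear_bicomod m"
proof -
  from adj obtain \<eta> \<epsilon> where eta: "is_bmap (idb D) (bcomp n m) \<eta>"
    and eps: "is_bmap (bcomp m n) (idb C) \<epsilon>"
    and tri: "bmap_eq m m
          (vcomp (runit_inv m) (vcomp (lwhisk m \<eta>) (vcomp (bassoc_inv m n)
             (vcomp (rwhisk \<epsilon> (idb C)) lunit)))) idmap"
    unfolding is_adjunction_def by blast
  show ?thesis unfolding linear_bicomod_def
  proof
    fix i assume i: "i \<in> pos m"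
    define P where "P = (i, \<lambda>e\<in>dir m i. fst ((\<lambda>e\<in>dir m i. onpos \<eta> (lab m i e)) e))"
    have P: "P \<in> pos (bcomp m n)"
    proof -
      have "\<forall>e\<in>dir m i. fst (onpos \<eta> (lab m i e)) \<in> pos n \<and> base n (fst (onpos \<eta> (lab m i e))) = lab m i e"
      proof
        fix e assume e: "e \<in> dir m i"
        have "lab m i e \<in> D" using wf i e unfolding wf_bicomod_def by blast
        then show "fst (onpos \<eta> (lab m i e)) \<in> pos n \<and> base n (fst (onpos \<eta> (lab m i e))) = lab m i e"
          using eta unfolding is_bmap_def idb_def bcomp_def by (auto simp: split_beta)
      qed
      then show ?thesis using i unfolding P_def bcomp_def by auto
    qed
    obtain e0 f0 where ef: "ondir \<epsilon> P () = (e0, f0)" by fastforce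
    have "ondir \<epsilon> P () \<in> dir (bcomp m n) P"
      using eps P unfolding is_bmap_def idb_def by auto
    then have e0: "e0 \<in> dir m i"
      using ef by (simp add: bcomp_def P_def)
    have on: "onpos (vcomp (runit_inv m) (vcomp (lwhisk m \<eta>) (vcomp (bassoc_inv m n)
             (vcomp (rwhisk \<epsilon> (idb C)) lunit)))) i = i"
      using tri i unfolding bmap_eq_def idmap_def by auto
    have od: "\<And>e'. ondir (vcomp (runit_inv m) (vcomp (lwhisk m \<eta>) (vcomp (bassoc_inv m n)
             (vcomp (rwhisk \<epsilon> (idb C)) lunit)))) i e' = fst (ondir \<epsilon> P ())"
      apply (simp add: vcomp_def runit_inv_def lwhisk_def bassoc_inv_def rwhisk_def lunit_def P_def split_beta)
      apply (rule arg_cong[where f="\<lambda>P. fst (ondir \<epsilon> P ())"])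
      apply (auto simp: fun_eq_iff)
      done
    have all: "\<forall>e'\<in>dir m i. e' = e0"
      using tri i on od ef unfolding bmap_eq_def idmap_def by auto
    show "\<exists>!e. e \<in> dir m i"
    proof (rule ex1I[of _ e0])
      show "e0 \<in> dir m i" by (rule e0)
    next
      fix y assume "y \<in> dir m i"
      then show "y = e0" by (rule bspec[OF all])
    qed
  qed
qed
lemma conj_nec:
  assumes adj: "is_adjunction D C n m"
  shows "conjunctive_bicomod C m"
proof -
  from adj obtain \<eta> \<epsilon> where eta: "is_bmap (idb C) (bcomp m n) \<eta>"
    and "is_bmap (bcomp n m) (idb D) \<epsilon>"
    and tri: "bmap_eq m m
          (vcomp (lunit_inv m) (vcomp (rwhisk \<eta> (bcomp m n)) (vcomp (bassoc m n)
             (vcomp (lwhisk m \<epsilon>) runit)))) idmap"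
    unfolding is_adjunction_def by blast
  have op: "onpos (vcomp (lunit_inv m) (vcomp (rwhisk \<eta> (bcomp m n)) (vcomp (bassoc m n)
             (vcomp (lwhisk m \<epsilon>) runit)))) i = fst (onpos \<eta> (base m i))" for i
    by (simp add: vcomp_def lunit_inv_def rwhisk_def bassoc_def lwhisk_def runit_def split_beta)
  have fix_: "i = fst (onpos \<eta> (base m i))" if "i \<in> pos m" for i
    using tri that op unfolding bmap_eq_def idmap_def by auto
  show ?thesis unfolding conjunctive_bicomod_def
  proof
    fix a assume a: "a \<in> C"
    have ex: "fst (onpos \<eta> a) \<in> pos m \<and> base m (fst (onpos \<eta> a)) = a"
      using eta a unfolding is_bmap_def idb_def bcomp_def by (auto simp: split_beta)
    show "\<exists>!i. i \<in> pos m \<and> base m i = a"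
    proof (rule ex1I[of _ "fst (onpos \<eta> a)"])
      show "fst (onpos \<eta> a) \<in> pos m \<and> base m (fst (onpos \<eta> a)) = a" by (rule ex)
    next
      fix i assume "i \<in> pos m \<and> base m i = a"
      then show "i = fst (onpos \<eta> a)" using fix_ by metis
    qed
  qed
qed
lemma lin_suff:
  fixes C :: "'c set" and D :: "'d set" and m :: "('i, 'e, 'c, 'd) bicomod"
  assumes wf: "wf_bicomod C D m" and lin: "linear_bicomod m"
  shows "is_adjunction C D m (lin_radj D m)"
proof -
  define te where "te i = (THE e. e \<in> dir m i)" for i
  have te: "te i \<in> dir m i" if "i \<in> pos m" for i
    using lin that unfolding linear_bicomod_def te_def by (metis theI')
  have teu: "e = te i" if "i \<in> pos m" "e \<in> dir m i" for i e
    using lin that unfolding linear_bicomod_def te_def by (metis the1_equality)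
  define n where "n = lin_radj D m"
  define \<eta> :: "('d, 'd \<times> ('i \<Rightarrow> 'i), 'i \<times> 'e, unit) bmap" where
    "\<eta> = \<lparr>onpos = (\<lambda>b. (b, \<lambda>k\<in>dir n b. k)), ondir = (\<lambda>_ _. ())\<rparr>"
  define \<epsilon> :: "('i \<times> ('e \<Rightarrow> 'd), 'c, unit, 'e \<times> 'i) bmap" where
    "\<epsilon> = \<lparr>onpos = (\<lambda>(i, h). base m i), ondir = (\<lambda>(i, h) u. (te i, i))\<rparr>"
  have dirn: "dir n b = {k \<in> pos m. lab m k (te k) = b}" for b
    unfolding n_def lin_radj_def te_def by simp
  have posn: "pos n = D" and basen: "base n = id" and labn: "lab n b k = base m k" for b k
    unfolding n_def lin_radj_def by auto
  have wfb: "base m i \<in> C" if "i \<in> pos m" for i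
    using wf that unfolding wf_bicomod_def by auto
  have wfn: "wf_bicomod D C n"
    using wf unfolding wf_bicomod_def n_def lin_radj_def by auto
  have e1: "is_bmap (idb D) (bcomp n m) \<eta>"
    unfolding is_bmap_def
    apply (auto simp: \<eta>_def idb_def bcomp_def dirn posn basen labn)
    apply (metis teu)
    done
  have e2: "is_bmap (bcomp m n) (idb C) \<epsilon>"
    unfolding is_bmap_def
    apply (auto simp: \<epsilon>_def idb_def bcomp_def dirn posn basen labn te wfb)
    done
  have t1: "bmap_eq m m
          (vcomp (runit_inv m) (vcomp (lwhisk m \<eta>) (vcomp (bassoc_inv m n)
             (vcomp (rwhisk \<epsilon> (idb C)) lunit)))) idmap"
    unfolding bmap_eq_def
    apply (auto simp: \<eta>_def \<epsilon>_def idb_def vcomp_def runit_inv_def lwhisk_def bassoc_inv_def rwhisk_def lunit_def idmap_def split_beta dirn posn basen labn te)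
    apply (metis teu)
    done
  have t2: "bmap_eq n n
          (vcomp (lunit_inv n) (vcomp (rwhisk \<eta> (bcomp n m)) (vcomp (bassoc n m)
             (vcomp (lwhisk n \<epsilon>) runit)))) idmap"
    unfolding bmap_eq_def
    apply (auto simp: \<eta>_def \<epsilon>_def idb_def vcomp_def lunit_inv_def lwhisk_def bassoc_def rwhisk_def runit_def idmap_def split_beta dirn posn basen labn)
    done
  show ?thesis unfolding is_adjunction_def n_def[symmetric]
    using wf wfn e1 e2 t1 t2 by blast
qed
lemma conj_suff:
  fixes C :: "'c set" and D :: "'d set" and m :: "('i, 'e, 'c, 'd) bicomod"
  assumes wf: "wf_bicomod C D m" and cj: "conjunctive_bicomod C m"
  shows "is_adjunction D C (conj_ladj C D m) m"
proof -
  define cp where "cp = conj_pos m"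
  have cp: "cp a \<in> pos m \<and> base m (cp a) = a" if "a \<in> C" for a
  proof -
    have "\<exists>!i. i \<in> pos m \<and> base m i = a" using cj that unfolding conjunctive_bicomod_def by blast
    from theI'[OF this] show ?thesis unfolding cp_def conj_pos_def .
  qed
  have wfb: "base m i \<in> C" if "i \<in> pos m" for i
    using wf that unfolding wf_bicomod_def by auto
  have wfl: "lab m i e \<in> D" if "i \<in> pos m" "e \<in> dir m i" for i e
    using wf that unfolding wf_bicomod_def by auto
  have cpb: "cp (base m i) = i" if "i \<in> pos m" for i
  proof -
    have "\<exists>!j. j \<in> pos m \<and> base m j = base m i" using cj wfb[OF that] unfolding conjunctive_bicomod_def by blast
    from the1_equality[OF this] that show ?thesis unfolding cp_def conj_pos_def by blast
  qed
  have up: "cp (base m (f ())) = f ()" if "f \<in> {()} \<rightarrow>\<^sub>E pos m" for f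
    using cpb that by auto
  define L where "L = conj_ladj C D m"
  have posL: "pos L = {(b, a, x). b \<in> D \<and> a \<in> C \<and> x \<in> dir m (cp a) \<and> lab m (cp a) x = b}"
    and baseL: "base L = (\<lambda>(b, a, x). b)" and dirL: "dir L = (\<lambda>_. {()})"
    and labL: "lab L = (\<lambda>(b, a, x) _. a)"
    unfolding L_def conj_ladj_def cp_def by auto
  define \<eta> :: "('c, 'i \<times> ('e \<Rightarrow> 'd \<times> 'c \<times> 'e), 'e \<times> unit, unit) bmap" where
    "\<eta> = \<lparr>onpos = (\<lambda>a. (cp a, \<lambda>y\<in>dir m (cp a). (lab m (cp a) y, a, y))), ondir = (\<lambda>_ _. ())\<rparr>"
  define \<epsilon> :: "(('d \<times> 'c \<times> 'e) \<times> (unit \<Rightarrow> 'i), 'd, unit, unit \<times> 'e) bmap" where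
    "\<epsilon> = \<lparr>onpos = (\<lambda>((b, a, x), h). b), ondir = (\<lambda>((b, a, x), h) u. ((), x))\<rparr>"
  have wfL: "wf_bicomod D C L"
    unfolding wf_bicomod_def posL baseL dirL labL by auto
  have e1: "is_bmap (idb C) (bcomp m L) \<eta>"
    unfolding is_bmap_def
    apply (auto simp: \<eta>_def idb_def bcomp_def posL baseL dirL labL cp wfl)
    done
  have e2: "is_bmap (bcomp L m) (idb D) \<epsilon>"
    unfolding is_bmap_def
    apply (auto simp: \<epsilon>_def idb_def bcomp_def posL baseL dirL labL cp wfl up)
    done
  have t1: "bmap_eq L L
          (vcomp (runit_inv L) (vcomp (lwhisk L \<eta>) (vcomp (bassoc_inv L m)
             (vcomp (rwhisk \<epsilon> (idb D)) lunit)))) idmap"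
    unfolding bmap_eq_def
    apply (auto simp: \<eta>_def \<epsilon>_def idb_def vcomp_def runit_inv_def lwhisk_def bassoc_inv_def rwhisk_def lunit_def idmap_def split_beta posL baseL dirL labL cp)
    done
  have t2: "bmap_eq m m
          (vcomp (lunit_inv m) (vcomp (rwhisk \<eta> (bcomp m L)) (vcomp (bassoc m L)
             (vcomp (lwhisk m \<epsilon>) runit)))) idmap"
    unfolding bmap_eq_def
    apply (auto simp: \<eta>_def \<epsilon>_def idb_def vcomp_def lunit_inv_def lwhisk_def bassoc_def rwhisk_def runit_def idmap_def split_beta posL baseL dirL labL cpb)
    done
  show ?thesis unfolding is_adjunction_def L_def[symmetric]
    using wf wfL e1 e2 t1 t2 by blast
qed
theorem proposition2p39:
  fixes C :: "'c set" and D :: "'d set" and m :: "('i, 'e, 'c, 'd) bicomod"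
  assumes "wf_bicomod C D m"
  shows "((\<forall>n :: ('j, 'f, 'd, 'c) bicomod. is_adjunction C D m n \<longrightarrow> linear_bicomod m)
          \<and> (linear_bicomod m \<longrightarrow> is_adjunction C D m (lin_radj D m)))
       \<and> ((\<forall>n :: ('k, 'g, 'd, 'c) bicomod. is_adjunction D C n m \<longrightarrow> conjunctive_bicomod C m)
          \<and> (conjunctive_bicomod C m \<longrightarrow> is_adjunction D C (conj_ladj C D m) m))"
  using assms lin_nec lin_suff conj_nec conj_suff by blast

end
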